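(* Let $\mathrm{Imp}$ be the category of implication algebras and their homomorphisms. If an implication algebra $(X,\triangleright,1)$ carries an internal implication algebra structure in $\mathrm{Imp}$ (i.e. a homomorphism $*:X\times X\to X$, with the constant given by a homomorphism from the terminal algebra, satisfying the implication algebra identities), then $X$ is the one-element (terminal) implication algebra.
   Context: An implication algebra is a set $X$ with a binary operation $\triangleright$ and a constant $1$ satisfying: $x\triangleright x=1$; $(x\triangleright y)\triangleright x=x$; $(x\triangleright y)\triangleright y=(y\triangleright x)\triangleright x$; $x\triangleright(y\triangleright z)=y\triangleright(x\triangleright z)$. Homomorphisms preserve $\triangleright$ and $1$. *)

theory Defs
  imports Main
begin

definition impl_alg :: "'a set \<Rightarrow> ('a \<Rightarrow> 'a \<Rightarrow> 'a) \<Rightarrow> 'a \<Rightarrow> bool" where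
  "impl_alg X imp one \<longleftrightarrow>
     one \<in> X \<and> (\<forall>x\<in>X. \<forall>y\<in>X. imp x y \<in> X) \<and>
     (\<forall>x\<in>X. imp x x = one) \<and>
     (\<forall>x\<in>X. \<forall>y\<in>X. imp (imp x y) x = x) \<and>
     (\<forall>x\<in>X. \<forall>y\<in>X. imp (imp x y) y = imp (imp y x) x) \<and>
     (\<forall>x\<in>X. \<forall>y\<in>X. \<forall>z\<in>X. imp x (imp y z) = imp y (imp x z))"

definition impl_hom :: "'a set \<Rightarrow> ('a \<Rightarrow> 'a \<Rightarrow> 'a) \<Rightarrow> 'a \<Rightarrow>
    'b set \<Rightarrow> ('b \<Rightarrow> 'b \<Rightarrow> 'b) \<Rightarrow> 'b \<Rightarrow> ('a \<Rightarrow> 'b) \<Rightarrow> bool" where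
  "impl_hom X imp one Y imp' one' f \<longleftrightarrow>
     f ` X \<subseteq> Y \<and> (\<forall>x\<in>X. \<forall>y\<in>X. f (imp x y) = imp' (f x) (f y)) \<and> f one = one'"

definition prod_imp :: "('a \<Rightarrow> 'a \<Rightarrow> 'a) \<Rightarrow> ('a \<times> 'a) \<Rightarrow> ('a \<times> 'a) \<Rightarrow> ('a \<times> 'a)" where
  "prod_imp imp p q = (imp (fst p) (fst q), imp (snd p) (snd q))"

definition term_imp :: "unit \<Rightarrow> unit \<Rightarrow> unit" where
  "term_imp u v = ()"

end

theory Submission
  imports Defs
begin

theorem mainTheorem15:
  fixes X :: "'a set" and imp :: "'a \<Rightarrow> 'a \<Rightarrow> 'a" and one :: 'a
    and star :: "'a \<times> 'a \<Rightarrow> 'a" and c :: "unit \<Rightarrow> 'a"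
  assumes "impl_alg X imp one"
    and "impl_hom (X \<times> X) (prod_imp imp) (one, one) X imp one star"
    and "impl_hom {()} term_imp () X imp one c"
    and "impl_alg X (\<lambda>x y. star (x, y)) (c ())"
  shows "X = {one}"
proof -
  have c1: "c () = one" using assms(3) by (simp add: impl_hom_def)
  have one: "one \<in> X" using assms(1) by (simp add: impl_alg_def)
  have hom: "\<And>a b d e. a\<in>X \<Longrightarrow> b\<in>X \<Longrightarrow> d\<in>X \<Longrightarrow> e\<in>X \<Longrightarrow>
      star (imp a b, imp d e) = imp (star (a,d)) (star (b,e))"
    using assms(2) by (simp add: impl_hom_def prod_imp_def)
  have xx: "\<And>x. x\<in>X \<Longrightarrow> imp x x = one" using assms(1) by (simp add: impl_alg_def)
  have k: "\<And>x y. x\<in>X \<Longrightarrow> y\<in>X \<Longrightarrow> imp (imp x y) x = x" using assms(1) by (simp add: impl_alg_def)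
  have sxx: "\<And>x. x\<in>X \<Longrightarrow> star (x, x) = one" using assms(4) c1 by (simp add: impl_alg_def)
  have sk: "\<And>x y. x\<in>X \<Longrightarrow> y\<in>X \<Longrightarrow> star (star (x, y), x) = x" using assms(4) by (simp add: impl_alg_def)
  have l1: "\<And>x. x\<in>X \<Longrightarrow> imp one x = x" using k xx by metis
  have s1: "\<And>x. x\<in>X \<Longrightarrow> star (one, x) = x" using sk sxx by metis
  have s2: "\<And>x. x\<in>X \<Longrightarrow> star (x, one) = one" using sk sxx one by metis
  have "\<And>x. x\<in>X \<Longrightarrow> x = one"
  proof -
    fix x assume x: "x\<in>X"
    have "x = star (imp x x, imp one x)" using s1 xx l1 x by simp
    also have "\<dots> = imp (star (x, one)) (star (x, x))" using hom x one by blast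
    also have "\<dots> = one" using s2 sxx x xx one by simp
    finally show "x = one" .
  qed
  thus ?thesis using one by blast
qed

end
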